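(* Let $\mathcal M$ satisfy Assumptions (A), (RE) and (I). Suppose that the distributions $\{\mu_s\}_{s\in\mathcal S}$ are absolutely continuous with respect to Lebesgue measure on $\mathbb R^d$ and have finite second-order moments. If, for some $s,s'\in\mathcal S$, the structural counterfactual operator $T^*_{\langle s'|s\rangle}$ coincides ($\mu_s$-a.e.) with the gradient of a convex function $\phi:\mathbb R^d\to\mathbb R$, then $T^*_{\langle s'|s\rangle}$ is the ($\mu_s$-a.e. unique) solution of $$\min_{T:\ T_\sharp\mu_s=\mu_{s'}}\int_{\mathcal X_s}\|x-T(x)\|^2\,\mathrm d\mu_s(x).$$
   Context: Let $(\Omega,\mathcal A,\mathbb P)$ be a probability space. A structural causal model (SCM) $\mathcal M=\langle U,G\rangle$ consists of two disjoint finite index sets $\mathcal I$ (endogenous) and $\mathcal J$ (exogenous), measurable product spaces $\mathcal V=\prod_{i\in\mathcal I}\mathcal V_i\subseteq\mathbb R^{|\mathcal I|}$ and $\mathcal U=\prod_{j\in\mathcal J}\mathcal U_j\subseteq\mathbb R^{|\mathcal J|}$, a random vector $U:\Omega\to\mathcal U$ (its components need not be independent), and for each $i\in\mathcal I$ subsets $\mathrm{Endo}(i)\subseteq\mathcal I$, $\mathrm{Exo}(i)\subseteq\mathcal J$ (endogenous and exogenous parents) and a measurable map $G_i:\mathcal V_{\mathrm{Endo}(i)}\times\mathcal U_{\mathrm{Exo}(i)}\to\mathcal V_i$. A random vector $V:\Omega\to\mathcal V$ is a solution of $\mathcal M$ if $V_i=G_i(V_{\mathrm{Endo}(i)},U_{\mathrm{Exo}(i)})$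 $\mathbb P$-a.s. for every $i\in\mathcal I$. The graph of $\mathcal M$ has nodes $\mathcal I\cup\mathcal J$ and an edge $k\to l$ iff $l\in\mathcal I$ and $k\in\mathrm{Endo}(l)\cup\mathrm{Exo}(l)$. Assumption (A): the graph of $\mathcal M$ is acyclic; then $\mathcal M$ has a solution, unique up to $\mathbb P$-null sets. For $I\subseteq\mathcal I$ and $v_I\in\mathcal V_I$, the do-intervention $\mathrm{do}(V_I=v_I)$ produces the model $\langle U,\tilde G\rangle$ with $\tilde G_i\equiv v_i$ for $i\in I$ and $\tilde G_i=G_i$ otherwise (same $U$); it is again acyclic, and its solution is denoted $V_{V_I=v_I}$. Standing setting: the solution is $V=(X,S)$ where $X:\Omega\to\mathcal X\subseteq\mathbb R^d$ and $S:\Omega\to\mathcal S$ with $\mathcal S\subset\mathbb R$ finite and $\mathbb P(S=s)>0$ for all $s\in\mathcal S$. $U_X$ denotes the vector of exogenous parents of the components of $X$, and $U_S$ that of $S$. For $s\in\mathcal S$, $X_{S=s}$ denotes the $X$-component of the solution of the model intervened by $\mathrm{do}(S=s)$. Notation: $\mu_s:=\mathcal L(X\mid S=s)$ with support $\mathcal X_s$. Under (A) there is a measurable $F$ with $X=F(S,U_X)$ a.s. and $X_{S=s}=F(s,U_X)$ a.s. for every $s$; set $f_s(u):=F(s,u)$. Assumption (I): the functions $\{f_s\}_{s\in\mathcal S}$ are injective; under (I), the structural counterfactual operator is $T^*_{\langle s'|s\rangle}:=f_{s'}\circ f_s^{-1}|_{\mathcal X_s}$. Assumption (RE): $U_S$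 is independent of $U_X$, and no component of $X$ is an endogenous parent of $S$. $T_\sharp P:=P\circ T^{-1}$. *)

theory Defs
  imports "HOL-Probability.Probability"
begin

abbreviation real_vec_space :: "'i set \<Rightarrow> ('i \<Rightarrow> real) measure" where
  "real_vec_space I \<equiv> PiM I (\<lambda>_. (borel :: real measure))"

text \<open>Graph of the SCM: nodes are Inl i (endogenous) and Inr j (exogenous);
  an edge k -> l iff l is endogenous and k is one of its parents.\<close>
definition scm_graph :: "('i \<Rightarrow> 'i set) \<Rightarrow> ('i \<Rightarrow> 'j set) \<Rightarrow> (('i + 'j) \<times> ('i + 'j)) set" where
  "scm_graph Endo Exo = {(k, Inl l) | k l. k \<in> Inl ` Endo l \<union> Inr ` Exo l}"

definition scm_wf ::
  "('j \<Rightarrow> real set) \<Rightarrow> ('i \<Rightarrow> 'i set) \<Rightarrow> ('i \<Rightarrow> 'j set)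
    \<Rightarrow> ('i \<Rightarrow> ('i \<Rightarrow> real) \<Rightarrow> ('j \<Rightarrow> real) \<Rightarrow> real) \<Rightarrow> bool" where
  "scm_wf Usp Endo Exo G \<longleftrightarrow>
     (\<forall>j. Usp j \<in> sets borel) \<and>
     (\<forall>i. (\<lambda>(v, u). G i v u) \<in> borel_measurable (real_vec_space UNIV \<Otimes>\<^sub>M real_vec_space UNIV)) \<and>
     (\<forall>i v v' u u'. (\<forall>k\<in>Endo i. v k = v' k) \<longrightarrow> (\<forall>j\<in>Exo i. u j = u' j) \<longrightarrow> G i v u = G i v' u')"

definition exo_random_vector :: "'a measure \<Rightarrow> ('j \<Rightarrow> real set) \<Rightarrow> ('a \<Rightarrow> 'j \<Rightarrow> real) \<Rightarrow> bool" where
  "exo_random_vector M Usp U \<longleftrightarrow>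
     U \<in> M \<rightarrow>\<^sub>M real_vec_space UNIV \<and> (\<forall>\<omega>\<in>space M. \<forall>j. U \<omega> j \<in> Usp j)"

definition scm_solution ::
  "'a measure \<Rightarrow> ('a \<Rightarrow> 'j \<Rightarrow> real) \<Rightarrow> ('i \<Rightarrow> ('i \<Rightarrow> real) \<Rightarrow> ('j \<Rightarrow> real) \<Rightarrow> real)
    \<Rightarrow> ('a \<Rightarrow> 'i \<Rightarrow> real) \<Rightarrow> bool" where
  "scm_solution M U G V \<longleftrightarrow>
     V \<in> M \<rightarrow>\<^sub>M real_vec_space UNIV \<and> (AE \<omega> in M. \<forall>i. V \<omega> i = G i (V \<omega>) (U \<omega>))"

definition do_intervention ::
  "('i \<Rightarrow> ('i \<Rightarrow> real) \<Rightarrow> ('j \<Rightarrow> real) \<Rightarrow> real) \<Rightarrow> 'i set \<Rightarrow> ('i \<Rightarrow> real)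
    \<Rightarrow> ('i \<Rightarrow> ('i \<Rightarrow> real) \<Rightarrow> ('j \<Rightarrow> real) \<Rightarrow> real)" where
  "do_intervention G I v = (\<lambda>i. if i \<in> I then (\<lambda>_ _. v i) else G i)"

text \<open>Endogenous indices are 'd option: Some k is the k-th component of X, None is S.\<close>
definition Xof :: "('a \<Rightarrow> 'd option \<Rightarrow> real) \<Rightarrow> 'a \<Rightarrow> real ^ 'd::finite" where
  "Xof V \<omega> = (\<chi> k. V \<omega> (Some k))"

definition Sof :: "('a \<Rightarrow> 'd option \<Rightarrow> real) \<Rightarrow> 'a \<Rightarrow> real" where
  "Sof V \<omega> = V \<omega> None"

definition UX_idx :: "('d option \<Rightarrow> 'j set) \<Rightarrow> 'j set" where
  "UX_idx Exo = (\<Union>k. Exo (Some k))"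

definition US_idx :: "('d option \<Rightarrow> 'j set) \<Rightarrow> 'j set" where
  "US_idx Exo = Exo None"

definition cond_law :: "'a measure \<Rightarrow> ('a \<Rightarrow> 'b::topological_space) \<Rightarrow> ('a \<Rightarrow> real) \<Rightarrow> real \<Rightarrow> 'b measure" where
  "cond_law M X S s = distr (uniform_measure M {\<omega>\<in>space M. S \<omega> = s}) borel X"

definition cf_operator :: "(real \<Rightarrow> ('j \<Rightarrow> real) \<Rightarrow> 'b) \<Rightarrow> ('j \<Rightarrow> real) set \<Rightarrow> real \<Rightarrow> real \<Rightarrow> 'b \<Rightarrow> 'b" where
  "cf_operator F D s' s x = F s' (the_inv_into D (F s) x)"

definition transport_map :: "('b::euclidean_space) measure \<Rightarrow> 'b measure \<Rightarrow> ('b \<Rightarrow> 'b) \<Rightarrow> bool" where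
  "transport_map \<mu> \<nu> T \<longleftrightarrow> T \<in> borel_measurable (completion \<mu>) \<and> distr (completion \<mu>) borel T = \<nu>"

definition quad_cost :: "('b::euclidean_space) measure \<Rightarrow> ('b \<Rightarrow> 'b) \<Rightarrow> ennreal" where
  "quad_cost \<mu> T = (\<integral>\<^sup>+ x. ennreal ((norm (x - T x))\<^sup>2) \<partial>completion \<mu>)"

definition monge_solution :: "('b::euclidean_space) measure \<Rightarrow> 'b measure \<Rightarrow> ('b \<Rightarrow> 'b) \<Rightarrow> bool" where
  "monge_solution \<mu> \<nu> T \<longleftrightarrow> transport_map \<mu> \<nu> T \<and>
     (\<forall>T'. transport_map \<mu> \<nu> T' \<longrightarrow> quad_cost \<mu> T \<le> quad_cost \<mu> T')"

end

theory Submission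
  imports Defs
begin

lemma gderiv_dir:
  fixes \<phi> :: "'a::real_inner \<Rightarrow> real"
  assumes "GDERIV \<phi> x :> g"
  shows "((\<lambda>t. \<phi> (x + t *\<^sub>R v)) has_real_derivative (g \<bullet> v)) (at 0)"
proof -
  have d1: "((\<lambda>t::real. x + t *\<^sub>R v) has_derivative (\<lambda>t. t *\<^sub>R v)) (at 0)"
    by (auto intro!: derivative_eq_intros)
  have d2: "(\<phi> has_derivative (\<lambda>h. h \<bullet> g)) (at (x + 0 *\<^sub>R v))"
    using assms by (simp add: gderiv_def)
  have "((\<lambda>t. \<phi> (x + t *\<^sub>R v)) has_derivative (\<lambda>t. (t *\<^sub>R v) \<bullet> g)) (at 0)"
    using diff_chain_at[OF d1 d2] by (simp add: o_def)
  moreover have "(\<lambda>t. (t *\<^sub>R v) \<bullet> g) = (\<lambda>t. t * (g \<bullet> v))"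
    by (auto simp: inner_commute)
  moreover have "(*) (g \<bullet> v) = (\<lambda>t. t * (g \<bullet> v))" by (auto simp: fun_eq_iff)
  ultimately show ?thesis
    by (simp add: has_field_derivative_def)
qed

lemma convex_tangent:
  fixes \<phi> :: "'a::real_inner \<Rightarrow> real"
  assumes cvx: "convex_on UNIV \<phi>" and d: "GDERIV \<phi> x :> g"
  shows "\<phi> x + g \<bullet> (z - x) \<le> \<phi> z"
proof -
  define \<psi> where "\<psi> t = \<phi> (x + t *\<^sub>R (z - x))" for t
  have c: "convex_on UNIV \<psi>"
  proof (rule convex_onI)
    fix t :: real and a b
    assume "0 < t" "t < 1"
    then have "\<phi> ((1 - t) *\<^sub>R (x + a *\<^sub>R (z - x)) + t *\<^sub>R (x + b *\<^sub>R (z - x)))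
       \<le> (1 - t) * \<phi> (x + a *\<^sub>R (z - x)) + t * \<phi> (x + b *\<^sub>R (z - x))"
      using convex_onD[OF cvx] by auto
    moreover have "(1 - t) *\<^sub>R (x + a *\<^sub>R (z - x)) + t *\<^sub>R (x + b *\<^sub>R (z - x))
        = x + ((1 - t) * a + t * b) *\<^sub>R (z - x)"
      by (simp add: algebra_simps)
    ultimately show "\<psi> ((1 - t) *\<^sub>R a + t *\<^sub>R b) \<le> (1 - t) * \<psi> a + t * \<psi> b"
      by (simp add: \<psi>_def)
  qed simp
  have D: "(\<psi> has_real_derivative (g \<bullet> (z - x))) (at 0 within UNIV)"
    unfolding \<psi>_def using gderiv_dir[OF d] by simp
  have "g \<bullet> (z - x) * (1 - 0) \<le> \<psi> 1 - \<psi> 0"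
    by (rule convex_on_imp_above_tangent[OF c _ _ _ D]) auto
  then show ?thesis by (simp add: \<psi>_def)
qed

lemma subgrad_unique:
  fixes \<phi> :: "'a::real_inner \<Rightarrow> real"
  assumes d: "GDERIV \<phi> x :> g" and sub: "\<And>z. \<phi> x + y \<bullet> (z - x) \<le> \<phi> z"
  shows "y = g"
proof -
  define v where "v = y - g"
  have D: "((\<lambda>t. \<phi> (x + t *\<^sub>R v)) has_real_derivative (g \<bullet> v)) (at 0)"
    using gderiv_dir[OF d] .
  then have L: "((\<lambda>h. (\<phi> (x + h *\<^sub>R v) - \<phi> x) / h) \<longlongrightarrow> g \<bullet> v) (at 0)"
    by (simp add: has_field_derivative_iff)
  then have L': "((\<lambda>h. (\<phi> (x + h *\<^sub>R v) - \<phi> x) / h) \<longlongrightarrow> g \<bullet> v) (at_right 0)"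
    by (rule filterlim_mono) (auto simp: at_le)
  have ev: "eventually (\<lambda>h. y \<bullet> v \<le> (\<phi> (x + h *\<^sub>R v) - \<phi> x) / h) (at_right (0::real))"
  proof (rule eventually_at_rightI[of 0 1])
    fix h :: real assume h: "h \<in> {0<..<1}"
    have "\<phi> x + y \<bullet> (h *\<^sub>R v) \<le> \<phi> (x + h *\<^sub>R v)" using sub[of "x + h *\<^sub>R v"] by simp
    then have "h * (y \<bullet> v) \<le> \<phi> (x + h *\<^sub>R v) - \<phi> x" by simp
    then show "y \<bullet> v \<le> (\<phi> (x + h *\<^sub>R v) - \<phi> x) / h" using h by (simp add: pos_le_divide_eq mult.commute)
  qed simp
  have "y \<bullet> v \<le> g \<bullet> v"
    by (rule tendsto_lowerbound[OF L' ev]) simp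
  then have "v \<bullet> v \<le> 0" by (simp add: v_def inner_diff_left)
  then show ?thesis unfolding v_def
    by (metis eq_iff_diff_eq_0 inner_gt_zero_iff not_le)
qed

lemma measurable_vecI:
  fixes f :: "'a \<Rightarrow> real ^ 'd::finite"
  assumes "\<And>i. (\<lambda>x. f x $ i) \<in> borel_measurable M"
  shows "f \<in> borel_measurable M"
proof (rule iffD2[OF borel_measurable_euclidean_space], rule ballI)
  fix b :: "real ^ 'd" assume "b \<in> Basis"
  then obtain i where "b = axis i 1" using axis_inverse by blast
  then show "(\<lambda>x. f x \<bullet> b) \<in> borel_measurable M" using assms[of i] by (simp only: cart_eq_inner_axis)
qed

definition gradfun :: "(real ^ 'd::finite \<Rightarrow> real) \<Rightarrow> real ^ 'd \<Rightarrow> real ^ 'd" where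
  "gradfun \<phi> x = (\<chi> i. lim (\<lambda>n. (\<phi> (x + inverse (real (Suc n)) *\<^sub>R axis i 1) - \<phi> x) / inverse (real (Suc n))))"

lemma gradfun_measurable:
  fixes \<phi> :: "real ^ 'd::finite \<Rightarrow> real"
  assumes "continuous_on UNIV \<phi>"
  shows "gradfun \<phi> \<in> borel_measurable borel"
proof (rule measurable_vecI)
  fix i
  have c: "(\<lambda>x. (\<phi> (x + inverse (real (Suc n)) *\<^sub>R axis i 1) - \<phi> x) / inverse (real (Suc n))) \<in> borel_measurable borel" for n
  proof (rule borel_measurable_continuous_onI)
    have "continuous_on UNIV (\<lambda>x::real^'d. x + inverse (real (Suc n)) *\<^sub>R axis i 1)"
      by (intro continuous_intros)
    then have "continuous_on UNIV (\<lambda>x. \<phi> (x + inverse (real (Suc n)) *\<^sub>R axis i 1))"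
      using continuous_on_compose2[OF assms] by blast
    then have "continuous_on UNIV (\<lambda>x. \<phi> (x + inverse (real (Suc n)) *\<^sub>R axis i 1) - \<phi> x)"
      using assms by (intro continuous_on_diff)
    then show "continuous_on UNIV (\<lambda>x. (\<phi> (x + inverse (real (Suc n)) *\<^sub>R axis i 1) - \<phi> x) / inverse (real (Suc n)))"
      by (intro continuous_on_divide continuous_on_const) auto
  qed
  show "(\<lambda>x. gradfun \<phi> x $ i) \<in> borel_measurable borel"
    unfolding gradfun_def vec_lambda_beta by (rule borel_measurable_lim_metric[OF c])
qed

lemma gradfun_eq:
  assumes d: "GDERIV \<phi> x :> g"
  shows "gradfun \<phi> x = g"
proof -
  have "lim (\<lambda>n. (\<phi> (x + inverse (real (Suc n)) *\<^sub>R axis i 1) - \<phi> x) / inverse (real (Suc n))) = g $ i" for i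
  proof (rule limI)
    have D: "((\<lambda>t. \<phi> (x + t *\<^sub>R axis i 1)) has_real_derivative (g \<bullet> axis i 1)) (at 0)"
      by (rule gderiv_dir[OF d])
    then have L: "((\<lambda>h. (\<phi> (x + h *\<^sub>R axis i 1) - \<phi> x) / h) \<longlongrightarrow> g $ i) (at 0)"
      by (simp add: has_field_derivative_iff inner_axis)
    have S: "filterlim (\<lambda>n. inverse (real (Suc n))) (at 0) sequentially"
      unfolding filterlim_at using LIMSEQ_inverse_real_of_nat by auto
    show "(\<lambda>n. (\<phi> (x + inverse (real (Suc n)) *\<^sub>R axis i 1) - \<phi> x) / inverse (real (Suc n))) \<longlonglongrightarrow> g $ i"
      using filterlim_compose[OF L S] by (simp add: o_def)
  qed
  then show ?thesis unfolding gradfun_def by (simp add: vec_eq_iff)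
qed

lemma completion_measurable_AE:
  fixes f g :: "'a \<Rightarrow> 'b::topological_space"
  assumes g: "g \<in> borel_measurable M" and ae: "AE x in M. f x = g x"
  shows "f \<in> borel_measurable (completion M)"
proof (rule measurableI)
  fix x assume "x \<in> space (completion M)" then show "f x \<in> space borel" by simp
next
  fix A :: "'b set" assume A: "A \<in> sets borel"
  have 1: "g -` A \<inter> space M \<in> sets M"
    using g A by (rule measurable_sets)
  then have 2: "g -` A \<inter> space M \<in> sets (completion M)"
    by (rule sets_completionI_sets)
  have 3: "AE x in completion M. (x \<in> g -` A \<inter> space M) = (x \<in> f -` A \<inter> space M)"
    using AE_completion[OF ae] by (rule eventually_mono) simp
  have 4: "f -` A \<inter> space M \<subseteq> space (completion M)" by simp
  have "f -` A \<inter> space M \<in> sets (completion M)"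
    by (rule completion.in_sets_AE[OF 3 2 4])
  then show "f -` A \<inter> space (completion M) \<in> sets (completion M)" by simp
qed

definition conjB :: "('a::real_inner \<Rightarrow> real) \<Rightarrow> 'a \<Rightarrow> 'a \<Rightarrow> ennreal" where
  "conjB \<phi> x0 y = (SUP z. ennreal ((z - x0) \<bullet> y - (\<phi> z - \<phi> x0)))"

lemma conjB_measurable:
  fixes \<phi> :: "'a::euclidean_space \<Rightarrow> real"
  assumes cont: "continuous_on UNIV \<phi>"
  shows "conjB \<phi> x0 \<in> borel_measurable borel"
proof -
  obtain D :: "'a set" where D: "countable D" "\<And>X. open X \<Longrightarrow> X \<noteq> {} \<Longrightarrow> \<exists>d\<in>D. d \<in> X"
    using countable_dense_exists by blast
  define h where "h y z = ennreal ((z - x0) \<bullet> y - (\<phi> z - \<phi> x0))" for y z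
  have hc: "continuous_on UNIV (\<lambda>z. (z - x0) \<bullet> y - (\<phi> z - \<phi> x0))" for y
    by (intro continuous_intros cont)
  have cl: "z \<in> closure D" for z
    unfolding closure_approachable
  proof (intro allI impI)
    fix e :: real assume "0 < e"
    then obtain d where "d \<in> D" "d \<in> ball z e" using D(2)[of "ball z e"] by auto
    then show "\<exists>y\<in>D. dist y z < e" by (auto simp: dist_commute)
  qed
  have eq: "conjB \<phi> x0 y = (SUP z\<in>D. h y z)" for y
  proof (rule antisym)
    show "conjB \<phi> x0 y \<le> (SUP z\<in>D. h y z)"
      unfolding conjB_def
    proof (rule SUP_least)
      fix z
      obtain d where d: "\<And>n. d n \<in> D" "d \<longlonglongrightarrow> z"
        using cl[of z] unfolding closure_sequential by blast
      have "(\<lambda>n. (d n - x0) \<bullet> y - (\<phi> (d n) - \<phi> x0)) \<longlonglongrightarrow> (z - x0) \<bullet> y - (\<phi> z - \<phi> x0)"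
        using continuous_on_tendsto_compose[OF hc d(2)] by simp
      then have T: "(\<lambda>n. h y (d n)) \<longlonglongrightarrow> h y z"
        unfolding h_def by (rule tendsto_ennrealI)
      show "ennreal ((z - x0) \<bullet> y - (\<phi> z - \<phi> x0)) \<le> (SUP z\<in>D. h y z)"
        unfolding h_def[symmetric]
        by (rule LIMSEQ_le_const2[OF T]) (auto intro!: SUP_upper d(1))
    qed
    show "(SUP z\<in>D. h y z) \<le> conjB \<phi> x0 y"
      unfolding conjB_def h_def by (rule SUP_subset_mono) auto
  qed
  have hm: "(\<lambda>y. h y z) \<in> borel_measurable borel" for z
  proof -
    have "(\<lambda>y. (z - x0) \<bullet> y - (\<phi> z - \<phi> x0)) \<in> borel_measurable borel"
      by (intro borel_measurable_continuous_onI continuous_intros)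
    then show ?thesis unfolding h_def by (rule measurable_compose[OF _ measurable_ennreal])
  qed
  show ?thesis
    unfolding eq[abs_def] by (rule borel_measurable_SUP[OF D(1) hm])
qed

definition Aff :: "('a::real_inner \<Rightarrow> real) \<Rightarrow> 'a \<Rightarrow> 'a \<Rightarrow> 'a \<Rightarrow> real" where
  "Aff \<phi> x0 p x = \<phi> x - \<phi> x0 - p \<bullet> (x - x0)"

context
  fixes \<phi> :: "'a::real_inner \<Rightarrow> real" and x0 p :: 'a
  assumes cvx: "convex_on UNIV \<phi>" and dp: "GDERIV \<phi> x0 :> p"
begin

lemma Aff_nonneg: "0 \<le> Aff \<phi> x0 p x"
  using convex_tangent[OF cvx dp, of x] by (simp add: Aff_def)

lemma key_ident: "Aff \<phi> x0 p x + ((x - x0) \<bullet> y - (\<phi> x - \<phi> x0)) = (x - x0) \<bullet> (y - p)"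
  by (simp add: Aff_def inner_diff_left inner_diff_right inner_commute)

lemma P1: "ennreal ((x - x0) \<bullet> (y - p)) \<le> ennreal (Aff \<phi> x0 p x) + conjB \<phi> x0 y"
proof -
  define t where "t = (x - x0) \<bullet> y - (\<phi> x - \<phi> x0)"
  have u: "ennreal t \<le> conjB \<phi> x0 y" unfolding conjB_def t_def by (rule SUP_upper) simp
  have w: "ennreal ((x - x0) \<bullet> (y - p)) \<le> ennreal (Aff \<phi> x0 p x) + ennreal t"
  proof (cases "0 \<le> t")
    case True then show ?thesis
    proof -
      have "(x - x0) \<bullet> (y - p) = Aff \<phi> x0 p x + t" using key_ident[of x y] by (simp add: t_def)
      then have "ennreal ((x - x0) \<bullet> (y - p)) = ennreal (Aff \<phi> x0 p x) + ennreal t"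
        using ennreal_plus[OF Aff_nonneg[of x] True] by simp
      then show ?thesis by simp
    qed
  next
    case False
    then have "(x - x0) \<bullet> (y - p) \<le> Aff \<phi> x0 p x" using key_ident[of x y] by (simp add: t_def)
    then have "ennreal ((x - x0) \<bullet> (y - p)) \<le> ennreal (Aff \<phi> x0 p x)" by (rule ennreal_leI)
    then show ?thesis by (rule order_trans) simp
  qed
  show ?thesis using w add_left_mono[OF u, of "ennreal (Aff \<phi> x0 p x)"] by (rule order_trans)
qed

lemma P2:
  assumes d: "GDERIV \<phi> x :> y"
  shows "ennreal (Aff \<phi> x0 p x) + conjB \<phi> x0 y = ennreal ((x - x0) \<bullet> (y - p))"
    and "0 \<le> (x - x0) \<bullet> (y - p)"
proof -
  define t where "t z = (z - x0) \<bullet> y - (\<phi> z - \<phi> x0)" for z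
  have le: "t z \<le> t x" for z
    using convex_tangent[OF cvx d, of z] by (simp add: t_def inner_diff_left inner_diff_right inner_commute)
  have t0: "0 \<le> t x" using le[of x0] by (simp add: t_def)
  have cj: "conjB \<phi> x0 y = ennreal (t x)"
    unfolding conjB_def t_def[symmetric]
    by (rule antisym) (auto intro!: SUP_least SUP_upper ennreal_leI le)
  show "ennreal (Aff \<phi> x0 p x) + conjB \<phi> x0 y = ennreal ((x - x0) \<bullet> (y - p))"
  proof -
    have "(x - x0) \<bullet> (y - p) = Aff \<phi> x0 p x + t x" using key_ident[of x y] by (simp add: t_def)
    then have "ennreal ((x - x0) \<bullet> (y - p)) = ennreal (Aff \<phi> x0 p x) + ennreal (t x)"
      using ennreal_plus[OF Aff_nonneg[of x] t0] by simp
    then show ?thesis using cj by simp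
  qed
  show "0 \<le> (x - x0) \<bullet> (y - p)"
    using key_ident[of x y] Aff_nonneg[of x] t0 by (simp add: t_def)
qed

lemma P3:
  assumes R: "0 \<le> (x - x0) \<bullet> (y - p)"
    and le: "ennreal (Aff \<phi> x0 p x) + conjB \<phi> x0 y \<le> ennreal ((x - x0) \<bullet> (y - p))"
  shows "\<phi> x + y \<bullet> (z - x) \<le> \<phi> z"
proof -
  define t where "t z = (z - x0) \<bullet> y - (\<phi> z - \<phi> x0)" for z
  have up: "ennreal (t w) \<le> conjB \<phi> x0 y" for w unfolding conjB_def t_def by (rule SUP_upper) simp
  have I: "Aff \<phi> x0 p x + t x = (x - x0) \<bullet> (y - p)" using key_ident[of x y] by (simp add: t_def)
  have "ennreal (Aff \<phi> x0 p x) \<le> ennreal ((x - x0) \<bullet> (y - p))"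
    using le by (rule order_trans[rotated]) simp
  then have "Aff \<phi> x0 p x \<le> (x - x0) \<bullet> (y - p)" using R by (simp add: ennreal_le_iff)
  then have tx: "0 \<le> t x" using I by simp
  have "t z \<le> t x"
  proof (cases "0 \<le> t z")
    case True
    have "ennreal (Aff \<phi> x0 p x) + ennreal (t z) \<le> ennreal ((x - x0) \<bullet> (y - p))"
      by (rule order_trans[OF add_left_mono[OF up[of z]] le])
    then have "ennreal (Aff \<phi> x0 p x + t z) \<le> ennreal ((x - x0) \<bullet> (y - p))"
      using ennreal_plus[OF Aff_nonneg[of x] True] by simp
    then have "Aff \<phi> x0 p x + t z \<le> (x - x0) \<bullet> (y - p)" using R by (simp add: ennreal_le_iff)
    then show ?thesis using I by simp
  next
    case False then show ?thesis using tx by simp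
  qed
  then show ?thesis by (simp add: t_def inner_diff_left inner_diff_right inner_commute)
qed

end

lemma abs_inner_le_sq:
  fixes a b :: "'a::real_inner"
  shows "\<bar>a \<bullet> b\<bar> \<le> (norm a)\<^sup>2 + (norm b)\<^sup>2"
proof -
  have "\<bar>a \<bullet> b\<bar> \<le> norm a * norm b" by (rule Cauchy_Schwarz_ineq2)
  also have "\<dots> \<le> (norm a)\<^sup>2 + (norm b)\<^sup>2"
    using sum_squares_bound[of "norm a" "norm b"] mult_nonneg_nonneg[OF norm_ge_zero norm_ge_zero, of a b]
    by linarith
  finally show ?thesis .
qed

lemma abs_inner_le_lin:
  fixes a b :: "'a::real_inner"
  shows "\<bar>a \<bullet> b\<bar> \<le> norm a * (1 + (norm b)\<^sup>2)"
proof -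
  have "\<bar>a \<bullet> b\<bar> \<le> norm a * norm b" by (rule Cauchy_Schwarz_ineq2)
  also have "norm b \<le> 1 + (norm b)\<^sup>2"
  proof -
    have "2 * norm b \<le> 1 + (norm b)\<^sup>2" using sum_squares_bound[of 1 "norm b"] by simp
    then show ?thesis using norm_ge_zero[of b] by linarith
  qed
  then have "norm a * norm b \<le> norm a * (1 + (norm b)\<^sup>2)" by (simp add: mult_left_mono)
  finally show ?thesis .
qed

locale OTsetting =
  fixes N :: "(real^'d::finite) measure" and \<nu> :: "(real^'d) measure"
    and \<phi> :: "real^'d \<Rightarrow> real" and Ts :: "real^'d \<Rightarrow> real^'d"
  assumes probN: "prob_space N"
    and idm: "(\<lambda>x. x) \<in> borel_measurable N"
    and momN: "integrable N (\<lambda>x. (norm x)\<^sup>2)"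
    and mom\<nu>: "integrable \<nu> (\<lambda>x. (norm x)\<^sup>2)"
    and Ts_m: "Ts \<in> borel_measurable N" and Ts_d: "distr N borel Ts = \<nu>"
    and cvx: "convex_on UNIV \<phi>"
    and grad: "AE x in N. GDERIV \<phi> x :> Ts x"
begin

lemma cont: "continuous_on UNIV \<phi>"
  by (rule convex_on_continuous[OF open_UNIV cvx])

lemma int_T2:
  fixes T :: "real^'d \<Rightarrow> real^'d"
  assumes Tm: "T \<in> borel_measurable N" and Td: "distr N borel T = \<nu>"
  shows "integrable N (\<lambda>x. (norm (T x))\<^sup>2)"
proof -
  have "integrable (distr N borel T) (\<lambda>y. (norm y)\<^sup>2)" using mom\<nu> Td by simp
  then show ?thesis by (subst (asm) integrable_distr_eq[OF Tm]) auto
qed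

lemma int_xT:
  fixes T :: "real^'d \<Rightarrow> real^'d"
  assumes Tm: "T \<in> borel_measurable N" and Td: "distr N borel T = \<nu>"
  shows "integrable N (\<lambda>x. x \<bullet> T x)"
proof (rule Bochner_Integration.integrable_bound)
  show "integrable N (\<lambda>x. (norm x)\<^sup>2 + (norm (T x))\<^sup>2)"
    using momN int_T2[OF Tm Td] by (rule Bochner_Integration.integrable_add)
  show "(\<lambda>x. x \<bullet> T x) \<in> borel_measurable N"
    using idm Tm by (rule borel_measurable_inner)
  show "AE x in N. norm (x \<bullet> T x) \<le> norm ((norm x)\<^sup>2 + (norm (T x))\<^sup>2)"
    using abs_inner_le_sq by (intro AE_I2) (auto simp: abs_le_iff)
qed

lemma int_lin:
  fixes T :: "real^'d \<Rightarrow> real^'d"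
  assumes Tm: "T \<in> borel_measurable N" and T2: "integrable N (\<lambda>x. (norm (T x))\<^sup>2)"
  shows "integrable N (\<lambda>x. a \<bullet> T x)"
proof (rule Bochner_Integration.integrable_bound)
  interpret N: prob_space N by (rule probN)
  show "integrable N (\<lambda>x. norm a * (1 + (norm (T x))\<^sup>2))"
    using T2 by (intro integrable_mult_right Bochner_Integration.integrable_add) auto
  show "(\<lambda>x. a \<bullet> T x) \<in> borel_measurable N"
    using borel_measurable_inner[OF borel_measurable_const Tm] by simp
  show "AE x in N. norm (a \<bullet> T x) \<le> norm (norm a * (1 + (norm (T x))\<^sup>2))"
    using abs_inner_le_lin by (intro AE_I2) (auto simp: abs_le_iff)
qed

lemma cost:
  fixes T :: "real^'d \<Rightarrow> real^'d"
  assumes Tm: "T \<in> borel_measurable N" and Td: "distr N borel T = \<nu>"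
  shows "(\<integral>\<^sup>+x. ennreal ((norm (x - T x))\<^sup>2) \<partial>N)
           = ennreal ((\<integral>x. (norm x)\<^sup>2 \<partial>N) - 2 * (\<integral>x. x \<bullet> T x \<partial>N) + (\<integral>y. (norm y)\<^sup>2 \<partial>\<nu>))"
    and "0 \<le> (\<integral>x. (norm x)\<^sup>2 \<partial>N) - 2 * (\<integral>x. x \<bullet> T x \<partial>N) + (\<integral>y. (norm y)\<^sup>2 \<partial>\<nu>)"
proof -
  have eq: "(\<lambda>x. (norm (x - T x))\<^sup>2) = (\<lambda>x. ((norm x)\<^sup>2 - 2 * (x \<bullet> T x)) + (norm (T x))\<^sup>2)"
    by (auto simp: power2_norm_eq_inner inner_diff_left inner_diff_right inner_commute)
  have i0: "integrable N (\<lambda>x. (norm x)\<^sup>2 - 2 * (x \<bullet> T x))"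
    by (intro Bochner_Integration.integrable_diff integrable_mult_right momN int_xT[OF Tm Td])
  have i1: "integrable N (\<lambda>x. (norm (x - T x))\<^sup>2)"
    unfolding eq by (intro Bochner_Integration.integrable_add i0 int_T2[OF Tm Td])
  have T2: "(\<integral>x. (norm (T x))\<^sup>2 \<partial>N) = (\<integral>y. (norm y)\<^sup>2 \<partial>\<nu>)"
    using integral_distr[OF Tm, of "\<lambda>y. (norm y)\<^sup>2"] Td by simp
  have I: "(\<integral>x. (norm (x - T x))\<^sup>2 \<partial>N)
      = (\<integral>x. (norm x)\<^sup>2 \<partial>N) - 2 * (\<integral>x. x \<bullet> T x \<partial>N) + (\<integral>y. (norm y)\<^sup>2 \<partial>\<nu>)"
  proof -
    have "(\<integral>x. (norm (x - T x))\<^sup>2 \<partial>N) = (\<integral>x. (norm x)\<^sup>2 - 2 * (x \<bullet> T x) \<partial>N) + (\<integral>x. (norm (T x))\<^sup>2 \<partial>N)"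
      unfolding eq by (rule Bochner_Integration.integral_add[OF i0 int_T2[OF Tm Td]])
    also have "(\<integral>x. (norm x)\<^sup>2 - 2 * (x \<bullet> T x) \<partial>N) = (\<integral>x. (norm x)\<^sup>2 \<partial>N) - (\<integral>x. 2 * (x \<bullet> T x) \<partial>N)"
      by (rule Bochner_Integration.integral_diff[OF momN integrable_mult_right[OF int_xT[OF Tm Td]]])
    also have "(\<integral>x. 2 * (x \<bullet> T x) \<partial>N) = 2 * (\<integral>x. x \<bullet> T x \<partial>N)"
      by (rule integral_mult_right_zero)
    finally show ?thesis using T2 by simp
  qed
  show "(\<integral>\<^sup>+x. ennreal ((norm (x - T x))\<^sup>2) \<partial>N)
           = ennreal ((\<integral>x. (norm x)\<^sup>2 \<partial>N) - 2 * (\<integral>x. x \<bullet> T x \<partial>N) + (\<integral>y. (norm y)\<^sup>2 \<partial>\<nu>))"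
    using nn_integral_eq_integral[OF i1] I by simp
  have "0 \<le> (\<integral>x. (norm (x - T x))\<^sup>2 \<partial>N)" by (intro integral_nonneg_AE AE_I2) simp
  then show "0 \<le> (\<integral>x. (norm x)\<^sup>2 \<partial>N) - 2 * (\<integral>x. x \<bullet> T x \<partial>N) + (\<integral>y. (norm y)\<^sup>2 \<partial>\<nu>)"
    using I by simp
qed

lemma x0_ex: "\<exists>x0. GDERIV \<phi> x0 :> Ts x0"
proof (rule ccontr)
  interpret N: prob_space N by (rule probN)
  assume "\<nexists>x0. GDERIV \<phi> x0 :> Ts x0"
  then have "AE x in N. False" using grad by (auto elim: AE_mp)
  then show False by (simp add: N.AE_False)
qed

lemma main_ineq:
  assumes Tm: "T \<in> borel_measurable N" and Td: "distr N borel T = \<nu>"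
  shows "(\<integral>x. x \<bullet> T x \<partial>N) \<le> (\<integral>x. x \<bullet> Ts x \<partial>N)"
    and "(\<integral>x. x \<bullet> T x \<partial>N) = (\<integral>x. x \<bullet> Ts x \<partial>N) \<Longrightarrow> AE x in N. T x = Ts x"
proof -
  interpret N: prob_space N by (rule probN)
  obtain x0 where dp: "GDERIV \<phi> x0 :> Ts x0" using x0_ex by blast
  define p where "p = Ts x0"
  note dp = dp[folded p_def]
  define A where "A = Aff \<phi> x0 p"
  define B where "B = conjB \<phi> x0"
  define F where "F T x = (x - x0) \<bullet> (T x - p)" for T :: "real^'d \<Rightarrow> real^'d" and x
  define H where "H T x = ennreal (A x) + B (T x)" for T :: "real^'d \<Rightarrow> real^'d" and x
  have Bm: "B \<in> borel_measurable borel"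
    unfolding B_def by (rule conjB_measurable[OF cont])
  have Ab: "A \<in> borel_measurable borel"
    unfolding A_def Aff_def[abs_def] by (intro borel_measurable_continuous_onI continuous_intros cont)
  have Am: "A \<in> borel_measurable N"
    using measurable_compose[OF idm Ab] by simp
  have BTm: "(\<lambda>x. B (T x)) \<in> borel_measurable N" if "T \<in> borel_measurable N" for T
    using measurable_compose[OF that Bm] by simp
  have eAm: "(\<lambda>x. ennreal (A x)) \<in> borel_measurable N"
    using measurable_compose[OF Am measurable_ennreal] by simp
  have Hm: "H T \<in> borel_measurable N" if "T \<in> borel_measurable N" for T
    unfolding H_def by (rule borel_measurable_add[OF eAm BTm[OF that]])
  have Fm0: "F T \<in> borel_measurable N" if "T \<in> borel_measurable N" for T
    unfolding F_def
    by (intro borel_measurable_inner borel_measurable_diff that idm borel_measurable_const)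
  have Fm: "(\<lambda>x. ennreal (F T x)) \<in> borel_measurable N" if "T \<in> borel_measurable N" for T
    using measurable_compose[OF Fm0[OF that] measurable_ennreal] by simp
  have FG: "F T x = (x \<bullet> T x - x0 \<bullet> T x) + (x0 \<bullet> p - p \<bullet> x)" for T x
    unfolding F_def by (simp add: inner_diff_left inner_diff_right inner_commute)
  have intc: "integrable N (\<lambda>x. x0 \<bullet> p - p \<bullet> x)"
    using int_lin[of "\<lambda>x. x" p] idm momN by auto
  have intG: "integrable N (\<lambda>x. x \<bullet> T x - x0 \<bullet> T x)"
    if "T \<in> borel_measurable N" "distr N borel T = \<nu>" for T
    using int_xT[OF that] int_lin[OF that(1) int_T2[OF that], of x0] by auto
  have intF: "integrable N (F T)" if "T \<in> borel_measurable N" "distr N borel T = \<nu>" for T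
    unfolding FG using intG[OF that] intc by auto
  have intx0: "(\<integral>x. x0 \<bullet> T x \<partial>N) = (\<integral>y. x0 \<bullet> y \<partial>\<nu>)"
    if "T \<in> borel_measurable N" "distr N borel T = \<nu>" for T
    using integral_distr[OF that(1), of "\<lambda>y. x0 \<bullet> y"] that(2) by simp
  have intFeq: "integral\<^sup>L N (F T) = (\<integral>x. x \<bullet> T x \<partial>N) - (\<integral>y. x0 \<bullet> y \<partial>\<nu>) + (\<integral>x. x0 \<bullet> p - p \<bullet> x \<partial>N)"
    if "T \<in> borel_measurable N" "distr N borel T = \<nu>" for T
  proof -
    have "integral\<^sup>L N (F T) = (\<integral>x. x \<bullet> T x - x0 \<bullet> T x \<partial>N) + (\<integral>x. x0 \<bullet> p - p \<bullet> x \<partial>N)"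
      unfolding FG by (rule Bochner_Integration.integral_add[OF intG[OF that] intc])
    also have "(\<integral>x. x \<bullet> T x - x0 \<bullet> T x \<partial>N) = (\<integral>x. x \<bullet> T x \<partial>N) - (\<integral>x. x0 \<bullet> T x \<partial>N)"
      by (rule Bochner_Integration.integral_diff[OF int_xT[OF that] int_lin[OF that(1) int_T2[OF that]]])
    finally show ?thesis using intx0[OF that] by simp
  qed
  have NN: "(\<integral>\<^sup>+x. H T x \<partial>N) = (\<integral>\<^sup>+x. ennreal (A x) \<partial>N) + (\<integral>\<^sup>+y. B y \<partial>\<nu>)"
    if "T \<in> borel_measurable N" "distr N borel T = \<nu>" for T
  proof -
    have "(\<integral>\<^sup>+x. H T x \<partial>N) = (\<integral>\<^sup>+x. ennreal (A x) \<partial>N) + (\<integral>\<^sup>+x. B (T x) \<partial>N)"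
      unfolding H_def by (rule nn_integral_add[OF eAm BTm[OF that(1)]])
    also have "(\<integral>\<^sup>+x. B (T x) \<partial>N) = (\<integral>\<^sup>+y. B y \<partial>\<nu>)"
    proof -
      have "integral\<^sup>N (distr N borel T) B = (\<integral>\<^sup>+x. B (T x) \<partial>N)"
        by (rule nn_integral_distr[OF that(1)]) (simp add: Bm)
      then show ?thesis using that(2) by simp
    qed
    finally show ?thesis .
  qed
  have P1': "ennreal (F T x) \<le> H T x" for T x
    unfolding F_def H_def A_def B_def by (rule P1[OF cvx dp])
  have HTs: "AE x in N. H Ts x = ennreal (F Ts x) \<and> 0 \<le> F Ts x"
    using grad
  proof eventually_elim
    case (elim x)
    show ?case unfolding F_def H_def A_def B_def using P2[OF cvx dp elim] by simp
  qed
  have FTs_nonneg: "0 \<le> integral\<^sup>L N (F Ts)"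
    using HTs by (intro integral_nonneg_AE) auto
  have NTs: "(\<integral>\<^sup>+x. H Ts x \<partial>N) = ennreal (integral\<^sup>L N (F Ts))"
  proof -
    have "(\<integral>\<^sup>+x. H Ts x \<partial>N) = (\<integral>\<^sup>+x. ennreal (F Ts x) \<partial>N)"
      using HTs by (intro nn_integral_cong_AE) auto
    also have "\<dots> = ennreal (integral\<^sup>L N (F Ts))"
      using HTs by (intro nn_integral_eq_integral intF Ts_m Ts_d) auto
    finally show ?thesis .
  qed
  have NT: "(\<integral>\<^sup>+x. H T x \<partial>N) = ennreal (integral\<^sup>L N (F Ts))"
    using NN[OF Tm Td] NN[OF Ts_m Ts_d] NTs by simp
  have intmax: "integrable N (\<lambda>x. max (F T x) 0)"
    using intF[OF Tm Td] by auto
  have maxeq: "ennreal (\<integral>x. max (F T x) 0 \<partial>N) = (\<integral>\<^sup>+x. ennreal (F T x) \<partial>N)"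
  proof -
    have "ennreal (\<integral>x. max (F T x) 0 \<partial>N) = (\<integral>\<^sup>+x. ennreal (max (F T x) 0) \<partial>N)"
      by (rule nn_integral_eq_integral[symmetric, OF intmax]) auto
    also have "\<dots> = (\<integral>\<^sup>+x. ennreal (F T x) \<partial>N)"
      by (intro nn_integral_cong) (auto simp: max_def ennreal_neg)
    finally show ?thesis .
  qed
  have le1: "(\<integral>\<^sup>+x. ennreal (F T x) \<partial>N) \<le> (\<integral>\<^sup>+x. H T x \<partial>N)"
    by (intro nn_integral_mono P1')
  have maxle: "(\<integral>x. max (F T x) 0 \<partial>N) \<le> integral\<^sup>L N (F Ts)"
  proof -
    have "ennreal (\<integral>x. max (F T x) 0 \<partial>N) \<le> ennreal (integral\<^sup>L N (F Ts))"
      using maxeq le1 NT by simp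
    then show ?thesis using ennreal_le_iff[OF FTs_nonneg] by blast
  qed
  have Fle: "integral\<^sup>L N (F T) \<le> (\<integral>x. max (F T x) 0 \<partial>N)"
    by (intro integral_mono intF[OF Tm Td] intmax) auto
  show "(\<integral>x. x \<bullet> T x \<partial>N) \<le> (\<integral>x. x \<bullet> Ts x \<partial>N)"
    using Fle maxle intFeq[OF Tm Td] intFeq[OF Ts_m Ts_d] by simp
  assume eq: "(\<integral>x. x \<bullet> T x \<partial>N) = (\<integral>x. x \<bullet> Ts x \<partial>N)"
  then have FF: "integral\<^sup>L N (F T) = integral\<^sup>L N (F Ts)"
    using intFeq[OF Tm Td] intFeq[OF Ts_m Ts_d] by simp
  have "(\<integral>x. max (F T x) 0 - F T x \<partial>N) = 0"
    using Fle maxle FF Bochner_Integration.integral_diff[OF intmax intF[OF Tm Td]] by simp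
  then have "AE x in N. max (F T x) 0 - F T x = 0"
    using intmax intF[OF Tm Td] by (subst (asm) integral_nonneg_eq_0_iff_AE) auto
  then have Fpos: "AE x in N. 0 \<le> F T x"
    by eventually_elim (auto simp: max_def split: if_splits)
  have "(\<integral>\<^sup>+x. ennreal (F T x) \<partial>N) = ennreal (integral\<^sup>L N (F T))"
    using Fpos by (intro nn_integral_eq_integral intF[OF Tm Td])
  then have eqNN: "(\<integral>\<^sup>+x. ennreal (F T x) \<partial>N) = (\<integral>\<^sup>+x. H T x \<partial>N)"
    using FF NT by simp
  have "(\<integral>\<^sup>+x. H T x - ennreal (F T x) \<partial>N) = (\<integral>\<^sup>+x. H T x \<partial>N) - (\<integral>\<^sup>+x. ennreal (F T x) \<partial>N)"
  proof (rule nn_integral_diff[OF Hm[OF Tm] Fm[OF Tm]])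
    show "integral\<^sup>N N (\<lambda>x. ennreal (F T x)) \<noteq> \<infinity>" using eqNN NT by simp
    show "AE x in N. ennreal (F T x) \<le> H T x" using P1' by (intro AE_I2)
  qed
  also have "\<dots> = 0" using eqNN NT by simp
  finally have "AE x in N. H T x - ennreal (F T x) = 0"
    using Hm[OF Tm] Fm[OF Tm] by (subst (asm) nn_integral_0_iff_AE) auto
  then show "AE x in N. T x = Ts x"
    using Fpos grad
  proof eventually_elim
    case (elim x)
    have "H T x \<le> ennreal (F T x)" using elim(1) by (rule ennreal_minus_eq_0)
    then have le: "ennreal (Aff \<phi> x0 p x) + conjB \<phi> x0 (T x) \<le> ennreal ((x - x0) \<bullet> (T x - p))"
      by (simp only: F_def H_def A_def B_def)
    have R: "0 \<le> (x - x0) \<bullet> (T x - p)" using elim(2) by (simp only: F_def)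
    have "\<And>z. \<phi> x + T x \<bullet> (z - x) \<le> \<phi> z" by (rule P3[OF cvx dp R le])
    then show ?case by (rule subgrad_unique[OF elim(3)])
  qed
qed

end

lemma law_indep:
  assumes P: "prob_space M" and USm: "US \<in> M \<rightarrow>\<^sub>M Ms" and UXm: "UX \<in> M \<rightarrow>\<^sub>M Mx"
    and ind: "prob_space.indep_var M Ms US Mx UX"
    and E: "E \<in> sets M" and A: "A \<in> sets Ms" and ae: "AE \<omega> in M. \<omega> \<in> E \<longleftrightarrow> US \<omega> \<in> A"
    and pos: "emeasure M E \<noteq> 0"
  shows "distr (uniform_measure M E) Mx UX = distr M Mx UX"
proof (rule measure_eqI)
  interpret prob_space M by (rule P)
  show "sets (distr (uniform_measure M E) Mx UX) = sets (distr M Mx UX)" by simp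
  fix B assume "B \<in> sets (distr (uniform_measure M E) Mx UX)"
  then have B: "B \<in> sets Mx" by simp
  have UXm': "UX \<in> uniform_measure M E \<rightarrow>\<^sub>M Mx"
    using UXm measurable_cong_sets[OF sets_uniform_measure[of M E] refl, of Mx] by simp
  define B' where "B' = UX -` B \<inter> space M"
  have Bs: "B' \<in> sets M" unfolding B'_def using UXm B by (rule measurable_sets)
  define A' where "A' = US -` A \<inter> space M"
  have As: "A' \<in> sets M" unfolding A'_def using USm A by (rule measurable_sets)
  have PM: "(\<lambda>x. (US x, UX x)) \<in> M \<rightarrow>\<^sub>M Ms \<Otimes>\<^sub>M Mx"
    using USm UXm by (rule measurable_Pair)
  have ABs: "A \<times> B \<in> sets (Ms \<Otimes>\<^sub>M Mx)" using A B by (rule pair_measureI)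
  define C where "C = (\<lambda>x. (US x, UX x)) -` (A \<times> B) \<inter> space M"
  have Cs: "C \<in> sets M" unfolding C_def using PM ABs by (rule measurable_sets)
  have "emeasure (distr (uniform_measure M E) Mx UX) B = emeasure (uniform_measure M E) B'"
    using emeasure_distr[OF UXm' B] by (simp add: B'_def)
  also have "\<dots> = emeasure M (E \<inter> B') / emeasure M E" using E Bs by simp
  also have "emeasure M (E \<inter> B') = emeasure M C"
  proof (rule emeasure_eq_AE)
    show "AE x in M. (x \<in> E \<inter> B') = (x \<in> C)"
      using ae by (rule eventually_mono) (auto simp: B'_def C_def simp: subsetD[OF sets.sets_into_space[OF E]])
    show "E \<inter> B' \<in> sets M" using E Bs by blast
    show "C \<in> sets M" by (rule Cs)
  qed
  also have "emeasure M C = ennreal (prob A' * prob B')"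
    using indep_varD[OF ind A B] by (simp add: emeasure_eq_measure C_def A'_def B'_def)
  also have "prob A' = prob E"
  proof -
    have "emeasure M A' = emeasure M E"
    proof (rule emeasure_eq_AE)
      show "AE x in M. (x \<in> A') = (x \<in> E)"
        using ae by (rule eventually_mono) (auto simp: A'_def simp: subsetD[OF sets.sets_into_space[OF E]])
    qed (use As E in auto)
    then show ?thesis by (simp add: emeasure_eq_measure)
  qed
  also have "ennreal (prob E * prob B') / emeasure M E = ennreal (prob B')"
  proof -
    have "ennreal (prob E * prob B') = ennreal (prob B') * emeasure M E"
      by (simp add: emeasure_eq_measure ennreal_mult mult.commute)
    then show ?thesis using pos by (simp add: ennreal_mult_divide_eq)
  qed
  also have "ennreal (prob B') = emeasure (distr M Mx UX) B"
    using emeasure_distr[OF UXm B] by (simp add: B'_def emeasure_eq_measure)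
  finally show "emeasure (distr (uniform_measure M E) Mx UX) B = emeasure (distr M Mx UX) B" .
qed

lemma iota_meas: "(\<lambda>u. u) \<in> PiM I (\<lambda>_. (borel::real measure)) \<rightarrow>\<^sub>M PiM UNIV (\<lambda>_. borel)"
proof -
  have "(\<lambda>\<omega> i. (\<lambda>u. u i) \<omega>) \<in> PiM I (\<lambda>_. (borel::real measure)) \<rightarrow>\<^sub>M PiM UNIV (\<lambda>_. borel)"
  proof (rule measurable_PiM_single')
    fix i :: 'a
    show "(\<lambda>u. u i) \<in> PiM I (\<lambda>_. (borel::real measure)) \<rightarrow>\<^sub>M borel"
    proof (cases "i \<in> I")
      case True then show ?thesis by (rule measurable_component_singleton)
    next
      case False
      have "(\<lambda>u. undefined) \<in> PiM I (\<lambda>_. (borel::real measure)) \<rightarrow>\<^sub>M (borel :: real measure)" by simp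
      moreover have "\<And>u. u \<in> space (PiM I (\<lambda>_. (borel::real measure))) \<Longrightarrow> undefined = u i"
        using False by (auto simp: space_PiM PiE_def extensional_def)
      ultimately show ?thesis by (rule measurable_cong[THEN iffD1, rotated])
    qed
  qed auto
  then show ?thesis by simp
qed

theorem theorem1:
  fixes M :: "'a measure"
    and Usp :: "'j::finite \<Rightarrow> real set"
    and Endo :: "'d::finite option \<Rightarrow> 'd option set"
    and Exo :: "'d option \<Rightarrow> 'j set"
    and G :: "'d option \<Rightarrow> ('d option \<Rightarrow> real) \<Rightarrow> ('j \<Rightarrow> real) \<Rightarrow> real"
    and U :: "'a \<Rightarrow> 'j \<Rightarrow> real"
    and V :: "'a \<Rightarrow> 'd option \<Rightarrow> real"
    and Vdo :: "real \<Rightarrow> 'a \<Rightarrow> 'd option \<Rightarrow> real"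
    and Sset :: "real set"
    and F :: "real \<Rightarrow> ('j \<Rightarrow> real) \<Rightarrow> real ^ 'd"
    and \<phi> :: "real ^ 'd \<Rightarrow> real"
    and s s' :: real
  assumes prob: "prob_space M"
    and wf: "scm_wf Usp Endo Exo G"
    and U_rv: "exo_random_vector M Usp U"
    and sol: "scm_solution M U G V"
    and A: "acyclic (scm_graph Endo Exo)"
    and Sset_fin: "finite Sset"
    and S_vals: "\<forall>\<omega>\<in>space M. Sof V \<omega> \<in> Sset"
    and S_pos: "\<forall>t\<in>Sset. measure M {\<omega>\<in>space M. Sof V \<omega> = t} > 0"
    and do_sol: "\<forall>t\<in>Sset. scm_solution M U (do_intervention G {None} (\<lambda>_. t)) (Vdo t)"
    and F_meas: "(\<lambda>(t, u). F t u) \<in> borel_measurable (borel \<Otimes>\<^sub>M real_vec_space (UX_idx Exo))"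
    and F_obs: "AE \<omega> in M. Xof V \<omega> = F (Sof V \<omega>) (restrict (U \<omega>) (UX_idx Exo))"
    and F_do: "\<forall>t\<in>Sset. AE \<omega> in M. Xof (Vdo t) \<omega> = F t (restrict (U \<omega>) (UX_idx Exo))"
    and RE_indep: "prob_space.indep_var M
                     (real_vec_space (US_idx Exo)) (\<lambda>\<omega>. restrict (U \<omega>) (US_idx Exo))
                     (real_vec_space (UX_idx Exo)) (\<lambda>\<omega>. restrict (U \<omega>) (UX_idx Exo))"
    and RE_parents: "\<forall>k. Some k \<notin> Endo None"
    and I: "\<forall>t\<in>Sset. inj_on (F t) (PiE (UX_idx Exo) Usp)"
    and ac: "\<forall>t\<in>Sset. absolutely_continuous lborel (cond_law M (Xof V) (Sof V) t)"
    and mom2: "\<forall>t\<in>Sset. integrable (cond_law M (Xof V) (Sof V) t) (\<lambda>x. (norm x)\<^sup>2)"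
    and s_in: "s \<in> Sset" and s'_in: "s' \<in> Sset"
    and cvx: "convex_on UNIV \<phi>"
    and grad: "AE x in cond_law M (Xof V) (Sof V) s.
                 GDERIV \<phi> x :> cf_operator F (PiE (UX_idx Exo) Usp) s' s x"
  shows "monge_solution (cond_law M (Xof V) (Sof V) s) (cond_law M (Xof V) (Sof V) s')
           (cf_operator F (PiE (UX_idx Exo) Usp) s' s)
       \<and> (\<forall>T. monge_solution (cond_law M (Xof V) (Sof V) s) (cond_law M (Xof V) (Sof V) s') T
              \<longrightarrow> (AE x in cond_law M (Xof V) (Sof V) s.
                     T x = cf_operator F (PiE (UX_idx Exo) Usp) s' s x))"
proof -
  interpret M: prob_space M by (rule prob)
  define X where "X = Xof V"
  define S where "S = Sof V"
  define UX where "UX = (\<lambda>\<omega>. restrict (U \<omega>) (UX_idx Exo))"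
  define US where "US = (\<lambda>\<omega>. restrict (U \<omega>) (US_idx Exo))"
  define D where "D = PiE (UX_idx Exo) Usp"
  define E where "E = (\<lambda>t. {\<omega> \<in> space M. S \<omega> = t})"
  define \<mu> where "\<mu> = (\<lambda>t. cond_law M X S t)"
  define Ts where "Ts = cf_operator F D s' s"
  define PX where "PX = PiM (UX_idx Exo) (\<lambda>_. (borel :: real measure))"
  have Vm: "V \<in> M \<rightarrow>\<^sub>M PiM UNIV (\<lambda>_. borel)" using sol by (simp add: scm_solution_def)
  have Um: "U \<in> M \<rightarrow>\<^sub>M PiM UNIV (\<lambda>_. borel)" using U_rv by (simp add: exo_random_vector_def)
  have Xm: "X \<in> borel_measurable M"
    unfolding X_def Xof_def
  proof (rule measurable_vecI)
    fix k
    show "(\<lambda>\<omega>. (\<chi> k. V \<omega> (Some k)) $ k) \<in> borel_measurable M"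
      using measurable_compose[OF Vm measurable_component_singleton[of "Some k" UNIV "\<lambda>_. borel"]] by simp
  qed
  have Sm: "S \<in> borel_measurable M"
    unfolding S_def Sof_def
    using measurable_compose[OF Vm measurable_component_singleton[of None UNIV "\<lambda>_. borel"]] by simp
  have UXm: "UX \<in> M \<rightarrow>\<^sub>M PX"
    unfolding UX_def PX_def using measurable_compose[OF Um measurable_restrict_subset[of "UX_idx Exo" UNIV]] by simp
  have USm: "US \<in> M \<rightarrow>\<^sub>M PiM (US_idx Exo) (\<lambda>_. (borel :: real measure))"
    unfolding US_def using measurable_compose[OF Um measurable_restrict_subset[of "US_idx Exo" UNIV]] by simp
  have Es: "E t \<in> sets M" for t
  proof -
    have "E t = S -` {t} \<inter> space M" by (auto simp: E_def)
    then show ?thesis using measurable_sets[OF Sm borel_closed[OF closed_singleton]] by simp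
  qed
  have Epos: "emeasure M (E t) \<noteq> 0" if "t \<in> Sset" for t
  proof -
    have "measure M (E t) > 0" using S_pos that by (simp add: E_def S_def)
    then show ?thesis by (simp add: M.emeasure_eq_measure)
  qed
  have Efin: "emeasure M (E t) \<noteq> \<infinity>" for t by (simp add: M.emeasure_eq_measure)
  have probU: "prob_space (uniform_measure M (E t))" if "t \<in> Sset" for t
    by (rule prob_space_uniform_measure[OF Epos[OF that] Efin])
  have Xm_u: "X \<in> uniform_measure M (E t) \<rightarrow>\<^sub>M borel" for t
    using Xm measurable_cong_sets[OF sets_uniform_measure[of M "E t"] refl, of borel] by simp
  have UXm_u: "UX \<in> uniform_measure M (E t) \<rightarrow>\<^sub>M PX" for t
    using UXm measurable_cong_sets[OF sets_uniform_measure[of M "E t"] refl, of PX] by simp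
  have \<mu>_eq: "\<mu> t = distr (uniform_measure M (E t)) borel X" for t
    by (simp add: \<mu>_def cond_law_def E_def)
  have prob\<mu>: "prob_space (\<mu> t)" if "t \<in> Sset" for t
    unfolding \<mu>_eq using prob_space.prob_space_distr[OF probU[OF that] Xm_u] .
  have sets\<mu>: "sets (\<mu> t) = sets borel" for t by (simp add: \<mu>_eq)
  have Endo0: "Endo None = {}"
  proof (rule ccontr)
    assume "Endo None \<noteq> {}"
    then obtain k where k: "k \<in> Endo None" by auto
    show False
    proof (cases k)
      case None
      then have "(Inl None, Inl None) \<in> scm_graph Endo Exo" using k by (auto simp: scm_graph_def)
      then have "(Inl None, Inl None) \<in> (scm_graph Endo Exo)\<^sup>+" by (rule r_into_trancl)
      then show False using A by (auto simp: acyclic_def)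
    next
      case (Some k') then show False using k RE_parents by auto
    qed
  qed
  define h where "h = (\<lambda>u. G None (\<lambda>_. 0) u)"
  have hm: "h \<in> borel_measurable (PiM (US_idx Exo) (\<lambda>_. borel))"
  proof -
    have G0: "(\<lambda>(v, u). G None v u) \<in> borel_measurable (real_vec_space UNIV \<Otimes>\<^sub>M real_vec_space UNIV)"
      using wf by (simp add: scm_wf_def)
    have P: "(\<lambda>u. ((\<lambda>_. 0::real), u)) \<in> PiM (US_idx Exo) (\<lambda>_. borel) \<rightarrow>\<^sub>M (real_vec_space UNIV \<Otimes>\<^sub>M real_vec_space UNIV)"
      by (intro measurable_Pair measurable_const iota_meas) (simp add: space_PiM)
    show ?thesis using measurable_compose[OF P G0] by (simp add: h_def)
  qed
  have dep: "\<forall>i v v' u u'. (\<forall>k\<in>Endo i. v k = v' k) \<longrightarrow> (\<forall>j\<in>Exo i. u j = u' j) \<longrightarrow> G i v u = G i v' u'"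
    using wf by (simp add: scm_wf_def)
  have Sae: "AE \<omega> in M. S \<omega> = h (US \<omega>)"
  proof -
    have "AE \<omega> in M. \<forall>i. V \<omega> i = G i (V \<omega>) (U \<omega>)" using sol by (simp add: scm_solution_def)
    then show ?thesis
    proof (rule eventually_mono)
      fix \<omega> assume a: "\<forall>i. V \<omega> i = G i (V \<omega>) (U \<omega>)"
      then have "S \<omega> = G None (V \<omega>) (U \<omega>)" by (simp add: S_def Sof_def)
      also have "\<dots> = G None (\<lambda>_. 0) (US \<omega>)"
        using dep[rule_format, of None "V \<omega>" "\<lambda>_. 0" "U \<omega>" "US \<omega>"] Endo0
        by (simp add: US_def US_idx_def)
      finally show "S \<omega> = h (US \<omega>)" by (simp add: h_def)
    qed
  qed
  have RE': "prob_space.indep_var M (PiM (US_idx Exo) (\<lambda>_. (borel :: real measure))) US PX UX"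
    using RE_indep by (simp add: US_def UX_def PX_def)
  have law: "distr (uniform_measure M (E t)) PX UX = distr M PX UX" if t: "t \<in> Sset" for t
  proof (rule law_indep[OF prob USm UXm RE' Es])
    show "h -` {t} \<inter> space (PiM (US_idx Exo) (\<lambda>_. borel)) \<in> sets (PiM (US_idx Exo) (\<lambda>_. borel))"
      using measurable_sets[OF hm borel_closed[OF closed_singleton]] .
    show "AE \<omega> in M. (\<omega> \<in> E t) = (US \<omega> \<in> h -` {t} \<inter> space (PiM (US_idx Exo) (\<lambda>_. borel)))"
      using Sae AE_space[of M]
    proof eventually_elim
      case (elim \<omega>)
      then show ?case using measurable_space[OF USm, of \<omega>] by (auto simp: E_def)
    qed
    show "emeasure M (E t) \<noteq> 0" by (rule Epos[OF t])
  qed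
  have Fm': "F s' \<in> PX \<rightarrow>\<^sub>M borel"
  proof -
    have "(\<lambda>u. (s', u)) \<in> PX \<rightarrow>\<^sub>M (borel \<Otimes>\<^sub>M real_vec_space (UX_idx Exo))"
      unfolding PX_def by (intro measurable_Pair measurable_const measurable_ident_sets) auto
    from measurable_compose[OF this F_meas] show ?thesis by simp
  qed
  have distr_eq: "distr (uniform_measure M (E t)) borel f = distr (distr M PX UX) borel (F s')"
    if t: "t \<in> Sset" and fm: "f \<in> uniform_measure M (E t) \<rightarrow>\<^sub>M borel"
      and ae: "AE \<omega> in uniform_measure M (E t). f \<omega> = F s' (UX \<omega>)" for t f
  proof -
    have FUm: "(\<lambda>\<omega>. F s' (UX \<omega>)) \<in> uniform_measure M (E t) \<rightarrow>\<^sub>M borel"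
      using measurable_compose[OF UXm_u Fm'] by simp
    have "distr (uniform_measure M (E t)) borel f = distr (uniform_measure M (E t)) borel (\<lambda>\<omega>. F s' (UX \<omega>))"
      by (rule distr_cong_AE[OF refl refl ae fm FUm])
    also have "\<dots> = distr (distr (uniform_measure M (E t)) PX UX) borel (F s')"
      using distr_distr[OF Fm' UXm_u] by (simp add: o_def)
    also have "\<dots> = distr (distr M PX UX) borel (F s')" using law[OF t] by simp
    finally show ?thesis .
  qed
  have UX_D: "UX \<omega> \<in> D" if "\<omega> \<in> space M" for \<omega>
    using U_rv that by (auto simp: exo_random_vector_def UX_def D_def)
  have obs: "AE \<omega> in uniform_measure M (E t). X \<omega> = F t (UX \<omega>)" for t
  proof (rule AE_uniform_measureI[OF Es])
    show "AE \<omega> in M. \<omega> \<in> E t \<longrightarrow> X \<omega> = F t (UX \<omega>)"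
      using F_obs by (rule eventually_mono) (auto simp: E_def X_def S_def UX_def)
  qed
  have \<nu>_eq: "\<mu> s' = distr (distr M PX UX) borel (F s')"
    unfolding \<mu>_eq by (rule distr_eq[OF s'_in Xm_u obs])
  have cont: "continuous_on UNIV \<phi>" by (rule convex_on_continuous[OF open_UNIV cvx])
  define g where "g = gradfun \<phi>"
  have gm: "g \<in> borel_measurable borel" unfolding g_def by (rule gradfun_measurable[OF cont])
  have gm\<mu>: "g \<in> borel_measurable (\<mu> s)"
    unfolding measurable_cong_sets[OF sets\<mu>[of s] refl] by (rule gm)
  have grad': "AE x in \<mu> s. GDERIV \<phi> x :> Ts x"
    unfolding \<mu>_def X_def S_def Ts_def D_def by (rule grad)
  have AEg: "AE x in \<mu> s. Ts x = g x"
    using grad' by (rule eventually_mono) (simp add: g_def gradfun_eq)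
  have gradX: "AE \<omega> in uniform_measure M (E s). g (X \<omega>) = F s' (UX \<omega>)"
  proof -
    have 1: "AE \<omega> in uniform_measure M (E s). GDERIV \<phi> (X \<omega>) :> Ts (X \<omega>)"
      using grad' unfolding \<mu>_eq by (rule AE_distrD[OF Xm_u])
    have 3: "AE \<omega> in uniform_measure M (E s). \<omega> \<in> space M"
      using AE_space[of "uniform_measure M (E s)"] by simp
    from 1 obs[of s] 3 show ?thesis
    proof eventually_elim
      case (elim \<omega>)
      have "g (X \<omega>) = Ts (X \<omega>)" using gradfun_eq[OF elim(1)] by (simp add: g_def)
      also have "\<dots> = F s' (the_inv_into D (F s) (F s (UX \<omega>)))"
        using elim(2) by (simp add: Ts_def cf_operator_def)
      also have "the_inv_into D (F s) (F s (UX \<omega>)) = UX \<omega>"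
        using I s_in UX_D[OF elim(3)] by (intro the_inv_into_f_f) (auto simp: D_def)
      finally show ?case .
    qed
  qed
  have Ts_m: "Ts \<in> borel_measurable (completion (\<mu> s))"
    by (rule completion_measurable_AE[OF gm\<mu> AEg])
  have Ts_d: "distr (completion (\<mu> s)) borel Ts = \<mu> s'"
  proof -
    have "distr (completion (\<mu> s)) borel Ts = distr (completion (\<mu> s)) borel g"
      by (rule distr_cong_AE[OF refl refl AE_completion[OF AEg] Ts_m measurable_completion[OF gm\<mu>]])
    also have "\<dots> = distr (\<mu> s) borel g" by (rule distr_completion[OF gm\<mu>])
    also have "\<dots> = distr (uniform_measure M (E s)) borel (g \<circ> X)"
      unfolding \<mu>_eq by (rule distr_distr[OF gm Xm_u])
    also have "\<dots> = distr (distr M PX UX) borel (F s')"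
    proof (rule distr_eq[OF s_in])
      show "g \<circ> X \<in> uniform_measure M (E s) \<rightarrow>\<^sub>M borel" using measurable_comp[OF Xm_u gm] .
      show "AE \<omega> in uniform_measure M (E s). (g \<circ> X) \<omega> = F s' (UX \<omega>)" using gradX by simp
    qed
    finally show ?thesis using \<nu>_eq by (rule trans[OF _ sym])
  qed
  have idm: "(\<lambda>x. x) \<in> borel_measurable (completion (\<mu> s))"
    by (rule measurable_completion[OF measurable_ident_sets[OF sets\<mu>]])
  have momN: "integrable (completion (\<mu> s)) (\<lambda>x. (norm x)\<^sup>2)"
  proof -
    have nm: "(\<lambda>x. (norm x)\<^sup>2) \<in> borel_measurable (\<mu> s)"
      unfolding measurable_cong_sets[OF sets\<mu>[of s] refl]
      by (intro borel_measurable_continuous_onI continuous_intros)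
    have "integrable (\<mu> s) (\<lambda>x. (norm x)\<^sup>2)" unfolding \<mu>_def X_def S_def using mom2 s_in by blast
    then show ?thesis using integrable_completion[OF nm] by blast
  qed
  have mom\<nu>: "integrable (\<mu> s') (\<lambda>x. (norm x)\<^sup>2)"
    unfolding \<mu>_def X_def S_def using mom2 s'_in by blast
  have probN: "prob_space (completion (\<mu> s))" by (rule prob_space.prob_space_completion[OF prob\<mu>[OF s_in]])
  interpret OT: OTsetting "completion (\<mu> s)" "\<mu> s'" \<phi> Ts
    by (rule OTsetting.intro[OF probN idm momN mom\<nu> Ts_m Ts_d cvx AE_completion[OF grad']])
  have Q: "quad_cost (\<mu> s) T = ennreal ((\<integral>x. (norm x)\<^sup>2 \<partial>completion (\<mu> s)) - 2 * (\<integral>x. x \<bullet> T x \<partial>completion (\<mu> s)) + (\<integral>y. (norm y)\<^sup>2 \<partial>\<mu> s'))"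
    and Q0: "0 \<le> (\<integral>x. (norm x)\<^sup>2 \<partial>completion (\<mu> s)) - 2 * (\<integral>x. x \<bullet> T x \<partial>completion (\<mu> s)) + (\<integral>y. (norm y)\<^sup>2 \<partial>\<mu> s')"
    if "transport_map (\<mu> s) (\<mu> s') T" for T
    using OT.cost[of T] that by (auto simp: quad_cost_def transport_map_def)
  have TsT: "transport_map (\<mu> s) (\<mu> s') Ts" using Ts_m Ts_d by (simp add: transport_map_def)
  have mon: "monge_solution (\<mu> s) (\<mu> s') Ts"
    unfolding monge_solution_def
  proof (intro conjI allI impI TsT)
    fix T' assume T': "transport_map (\<mu> s) (\<mu> s') T'"
    have "(\<integral>x. x \<bullet> T' x \<partial>completion (\<mu> s)) \<le> (\<integral>x. x \<bullet> Ts x \<partial>completion (\<mu> s))"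
      using T' OT.main_ineq(1)[of T'] by (simp add: transport_map_def)
    then show "quad_cost (\<mu> s) Ts \<le> quad_cost (\<mu> s) T'"
      unfolding Q[OF TsT] Q[OF T'] by (intro ennreal_leI) simp
  qed
  have uniq: "AE x in \<mu> s. T x = Ts x" if T: "monge_solution (\<mu> s) (\<mu> s') T" for T
  proof -
    have Tt: "transport_map (\<mu> s) (\<mu> s') T" using T by (simp add: monge_solution_def)
    have "quad_cost (\<mu> s) T \<le> quad_cost (\<mu> s) Ts" using T TsT by (simp add: monge_solution_def)
    moreover have "quad_cost (\<mu> s) Ts \<le> quad_cost (\<mu> s) T" using mon Tt by (simp add: monge_solution_def)
    ultimately have "quad_cost (\<mu> s) T = quad_cost (\<mu> s) Ts" by (rule antisym)
    then have "(\<integral>x. (norm x)\<^sup>2 \<partial>completion (\<mu> s)) - 2 * (\<integral>x. x \<bullet> T x \<partial>completion (\<mu> s)) + (\<integral>y. (norm y)\<^sup>2 \<partial>\<mu> s')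
        = (\<integral>x. (norm x)\<^sup>2 \<partial>completion (\<mu> s)) - 2 * (\<integral>x. x \<bullet> Ts x \<partial>completion (\<mu> s)) + (\<integral>y. (norm y)\<^sup>2 \<partial>\<mu> s')"
      unfolding Q[OF Tt] Q[OF TsT] using Q0[OF Tt] Q0[OF TsT] by (simp add: ennreal_inj)
    then have "(\<integral>x. x \<bullet> T x \<partial>completion (\<mu> s)) = (\<integral>x. x \<bullet> Ts x \<partial>completion (\<mu> s))" by simp
    then have "AE x in completion (\<mu> s). T x = Ts x"
      using OT.main_ineq(2)[of T] Tt by (simp add: transport_map_def)
    then show ?thesis by (simp add: AE_completion_iff)
  qed
  have final: "monge_solution (\<mu> s) (\<mu> s') Ts \<and> (\<forall>T. monge_solution (\<mu> s) (\<mu> s') T \<longrightarrow> (AE x in \<mu> s. T x = Ts x))"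
    using mon uniq by blast
  then show ?thesis unfolding \<mu>_def X_def S_def Ts_def D_def .
qed

end
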